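(* Let $R$ be a finite commutative principal ideal ring with unity. Suppose that $R$ has exactly two associated prime ideals $p_1,p_2$ (i.e. $\lvert \operatorname{Ass}(R)\rvert=2$) and that $p_1\cap p_2=\{0\}$. Then the zero divisor graph $\Gamma(R)$ is a divisor graph.
   Context: $\operatorname{Ass}(R)$ is the set of associated primes of $R$ as an $R$-module, i.e. prime ideals of $R$ of the form $\operatorname{ann}(x)$ for some nonzero $x\in R$. The zero divisor graph $\Gamma(R)$ is the simple graph whose vertex set is the set of nonzero zero divisors of $R$, distinct $a,b$ adjacent iff $ab=0$. For a nonempty set $T$ of positive integers, the divisor graph $G(T)$ has vertex set $T$, with distinct $i,j$ adjacent iff $i\mid j$ or $j\mid i$; a graph is a divisor graph if it is isomorphic to some $G(T)$. *)

theory Defs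
  imports Main
begin

text \<open>Ideals of a commutative ring with unity (type-class idiom; the ring is the whole type).\<close>
definition is_ideal :: "'a::comm_ring_1 set \<Rightarrow> bool" where
  "is_ideal I \<longleftrightarrow> 0 \<in> I \<and> (\<forall>x\<in>I. \<forall>y\<in>I. x + y \<in> I) \<and> (\<forall>r. \<forall>x\<in>I. r * x \<in> I)"

definition principal_ideal_ring :: "'a::comm_ring_1 itself \<Rightarrow> bool" where
  "principal_ideal_ring _ \<longleftrightarrow>
     (\<forall>I::'a set. is_ideal I \<longrightarrow> (\<exists>a. I = {r * a | r. True}))"

definition prime_ideal :: "'a::comm_ring_1 set \<Rightarrow> bool" where
  "prime_ideal P \<longleftrightarrow> is_ideal P \<and> P \<noteq> UNIV \<and> (\<forall>a b. a * b \<in> P \<longrightarrow> a \<in> P \<or> b \<in> P)"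

definition ann :: "'a::comm_ring_1 \<Rightarrow> 'a set" where
  "ann x = {r. r * x = 0}"

definition ass_primes :: "'a::comm_ring_1 set set" where
  "ass_primes = {P. prime_ideal P \<and> (\<exists>x. x \<noteq> 0 \<and> P = ann x)}"

definition nz_zero_divisors :: "'a::comm_ring_1 set" where
  "nz_zero_divisors = {a. a \<noteq> 0 \<and> (\<exists>b. b \<noteq> 0 \<and> a * b = 0)}"

definition zdg_adj :: "'a::comm_ring_1 \<Rightarrow> 'a \<Rightarrow> bool" where
  "zdg_adj a b \<longleftrightarrow> a \<noteq> b \<and> a * b = 0"

definition is_divisor_graph :: "'v set \<Rightarrow> ('v \<Rightarrow> 'v \<Rightarrow> bool) \<Rightarrow> bool" where
  "is_divisor_graph V E \<longleftrightarrow>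
     (\<exists>(T::nat set) f. T \<noteq> {} \<and> (\<forall>t\<in>T. 0 < t) \<and> bij_betw f V T \<and>
        (\<forall>a\<in>V. \<forall>b\<in>V. a \<noteq> b \<longrightarrow> (E a b \<longleftrightarrow> (f a dvd f b \<or> f b dvd f a))))"

end

theory Submission
  imports Defs
begin

lemma max_ann_exists:
  fixes b :: "'a::{comm_ring_1, finite}"
  assumes "b \<noteq> 0"
  shows "\<exists>c. c \<noteq> 0 \<and> ann b \<subseteq> ann c \<and> (\<forall>d. d \<noteq> 0 \<and> ann c \<subseteq> ann d \<longrightarrow> ann d = ann c)"
proof -
  let ?S = "{ann d | d. d \<noteq> 0 \<and> ann b \<subseteq> ann d}"
  have "finite ?S" by simp
  moreover have "ann b \<in> ?S" using assms by blast
  ultimately obtain M where M: "M \<in> ?S" "ann b \<subseteq> M" "\<forall>X\<in>?S. M \<subseteq> X \<longrightarrow> M = X"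
    using finite_has_maximal2[of ?S "ann b"] by blast
  then obtain c where c: "c \<noteq> 0" "ann b \<subseteq> ann c" "M = ann c" by blast
  show ?thesis
  proof (intro exI conjI allI impI)
    fix d assume "d \<noteq> 0 \<and> ann c \<subseteq> ann d"
    then show "ann d = ann c" using M c by blast
  qed (use c in auto)
qed

lemma max_ann_prime:
  fixes c :: "'a::comm_ring_1"
  assumes "c \<noteq> 0" "\<forall>d. d \<noteq> 0 \<and> ann c \<subseteq> ann d \<longrightarrow> ann d = ann c"
  shows "prime_ideal (ann c)"
  unfolding prime_ideal_def is_ideal_def
proof (intro conjI ballI allI impI)
  show "ann c \<noteq> UNIV"
  proof
    assume "ann c = UNIV"
    hence "1 \<in> ann c" by simp
    thus False using assms(1) by (simp add: ann_def)
  qed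
next
  fix u v assume uv: "u * v \<in> ann c"
  show "u \<in> ann c \<or> v \<in> ann c"
  proof (cases "u \<in> ann c")
    case True thus ?thesis by simp
  next
    case False
    hence "u \<notin> ann c" .
    hence uc: "u * c \<noteq> 0" by (simp add: ann_def)
    have "ann c \<subseteq> ann (u * c)" by (auto simp: ann_def) (metis mult.left_commute mult_zero_right)
    hence eq: "ann (u*c) = ann c" using assms(2) uc by blast
    have "v \<in> ann (u*c)" using uv by (simp add: ann_def ac_simps)
    thus ?thesis using eq by simp
  qed
qed (auto simp: ann_def algebra_simps)

lemma antichain_range:
  fixes x y k :: nat
  assumes "k + 1 \<le> x" "x \<le> 2*k" "k + 1 \<le> y" "y \<le> 2*k" "x dvd y"
  shows "x = y"
proof (rule ccontr)
  assume ne: "x \<noteq> y"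
  obtain q where q: "y = x * q" using assms(5) by blast
  have "q \<noteq> 0" using q assms by (metis mult_0_right not_one_le_zero le_add2 le_trans)
  moreover have "q \<noteq> 1" using q ne by auto
  ultimately have "q \<ge> 2" by simp
  hence "y \<ge> x * 2" using q by (metis mult_le_mono2)
  thus False using assms by linarith
qed

theorem theorem2p7:
  fixes p1 p2 :: "'a::{comm_ring_1, finite} set"
  assumes "principal_ideal_ring TYPE('a)"
    and "ass_primes = {p1, p2}"
    and "p1 \<noteq> p2"
    and "p1 \<inter> p2 = {0}"
  shows "is_divisor_graph (nz_zero_divisors :: 'a set) zdg_adj"
proof -
  have P1: "prime_ideal p1" "\<exists>x. x \<noteq> 0 \<and> p1 = ann x" using assms(2) unfolding ass_primes_def by blast+
  have P2: "prime_ideal p2" "\<exists>x. x \<noteq> 0 \<and> p2 = ann x" using assms(2) unfolding ass_primes_def by blast+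
  define A where "A = p1 - {0}"
  define B where "B = p2 - {0}"
  have AB: "A \<inter> B = {}" using assms(4) by (auto simp: A_def B_def)
  have V: "(nz_zero_divisors :: 'a set) = A \<union> B"
  proof
    show "nz_zero_divisors \<subseteq> A \<union> B"
    proof
      fix a :: 'a assume "a \<in> nz_zero_divisors"
      then obtain b where ab: "a \<noteq> 0" "b \<noteq> 0" "a * b = 0" unfolding nz_zero_divisors_def by blast
      obtain c where c: "c \<noteq> 0" "ann b \<subseteq> ann c" "\<forall>d. d \<noteq> 0 \<and> ann c \<subseteq> ann d \<longrightarrow> ann d = ann c"
        using max_ann_exists[OF ab(2)] by blast
      have "ann c \<in> ass_primes" unfolding ass_primes_def using max_ann_prime[OF c(1) c(3)] c(1) by blast
      hence "ann c = p1 \<or> ann c = p2" using assms(2) by blast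
      moreover have "a \<in> ann c" using c(2) ab(3) by (auto simp: ann_def)
      ultimately show "a \<in> A \<union> B" using ab(1) by (auto simp: A_def B_def)
    qed
  next
    show "A \<union> B \<subseteq> nz_zero_divisors"
      using P1(2) P2(2) by (auto simp: A_def B_def nz_zero_divisors_def ann_def)
  qed
  have cross: "a * b = 0" if "a \<in> A" "b \<in> B" for a b
  proof -
    have "a * b \<in> p1" using that P1(1) unfolding A_def prime_ideal_def is_ideal_def
      by (metis DiffD1 mult.commute)
    moreover have "a * b \<in> p2" using that P2(1) unfolding B_def prime_ideal_def is_ideal_def
      by blast
    ultimately show ?thesis using assms(4) by blast
  qed
  have inA: "a * b \<noteq> 0" if "a \<in> A" "b \<in> A" for a b
  proof
    assume "a * b = 0"
    hence "a * b \<in> p2" using P2(1) unfolding prime_ideal_def is_ideal_def by simp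
    hence "a \<in> p2 \<or> b \<in> p2" using P2(1) unfolding prime_ideal_def by blast
    thus False using that assms(4) by (auto simp: A_def)
  qed
  have inB: "a * b \<noteq> 0" if "a \<in> B" "b \<in> B" for a b
  proof
    assume "a * b = 0"
    hence "a * b \<in> p1" using P1(1) unfolding prime_ideal_def is_ideal_def by simp
    hence "a \<in> p1 \<or> b \<in> p1" using P1(1) unfolding prime_ideal_def by blast
    thus False using that assms(4) by (auto simp: B_def)
  qed
  have Vne: "A \<union> B \<noteq> {}" using assms(3,4) by (auto simp: A_def B_def)
  define m where "m = card A"
  define n where "n = card B"
  obtain gA where gA: "bij_betw gA A {0..<m}" using ex_bij_betw_finite_nat[of A] m_def by auto
  obtain gB where gB: "bij_betw gB B {0..<n}" using ex_bij_betw_finite_nat[of B] n_def by auto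
  define L :: nat where "L = fact (2*m)"
  have Lpos: "L \<ge> 1" by (simp add: L_def)
  define f where "f x = (if x \<in> A then m + 1 + gA x else L * (n + 1 + gB x))" for x
  have fA: "m + 1 \<le> f x \<and> f x \<le> 2*m" if "x \<in> A" for x
  proof -
    have "gA x < m" using that gA unfolding bij_betw_def by auto
    thus ?thesis using that unfolding f_def by auto
  qed
  have fB: "f x = L * (n + 1 + gB x) \<and> n + 1 \<le> n + 1 + gB x \<and> n + 1 + gB x \<le> 2*n" if "x \<in> B" for x
  proof -
    have "gB x < n" using that gB unfolding bij_betw_def by auto
    thus ?thesis using that AB unfolding f_def by auto
  qed
  have Adv: "f a dvd f b" if "a \<in> A" "b \<in> B" for a b
  proof -
    have "f a dvd L" unfolding L_def using fA[OF that(1)] by (intro dvd_fact) auto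
    thus ?thesis using fB[OF that(2)] by simp
  qed
  have Alt: "f a < f b" if "a \<in> A" "b \<in> B" for a b
  proof -
    have "f a \<le> 2*m" using fA[OF that(1)] by simp
    also have "\<dots> \<le> L" unfolding L_def by (rule fact_ge_self)
    also have "\<dots> < L * (n + 1 + gB b)" using Lpos fB[OF that(2)] by simp
    finally show ?thesis using fB[OF that(2)] by simp
  qed
  have injA: "f a = f b \<Longrightarrow> a = b" if "a \<in> A" "b \<in> A" for a b
    using that gA unfolding f_def bij_betw_def inj_on_def by auto
  have injB: "f a = f b \<Longrightarrow> a = b" if "a \<in> B" "b \<in> B" for a b
  proof -
    assume "f a = f b"
    moreover have "a \<notin> A" "b \<notin> A" using that AB by auto
    ultimately have "L * (n + 1 + gB a) = L * (n + 1 + gB b)" unfolding f_def by simp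
    hence "gB a = gB b" using Lpos by simp
    thus "a = b" using that gB unfolding bij_betw_def inj_on_def by blast
  qed
  have inj: "inj_on f (A \<union> B)"
    unfolding inj_on_def
    by (metis Alt Un_iff injA injB less_irrefl)
  have nodvdA: "\<not> f a dvd f b" if "a \<in> A" "b \<in> A" "a \<noteq> b" for a b
    using antichain_range[of m "f a" "f b"] fA that injA by blast
  have nodvdB: "\<not> f a dvd f b" if "a \<in> B" "b \<in> B" "a \<noteq> b" for a b
  proof
    assume "f a dvd f b"
    hence "L * (n + 1 + gB a) dvd L * (n + 1 + gB b)" using fB that by simp
    hence "(n + 1 + gB a) dvd (n + 1 + gB b)" using Lpos nat_mult_dvd_cancel1[of L] by (metis less_le_trans zero_less_one)
    hence "n + 1 + gB a = n + 1 + gB b" using antichain_range[of n] fB that by blast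
    hence "f a = f b" using fB that by simp
    thus False using injB that by blast
  qed
  show ?thesis
    unfolding is_divisor_graph_def V
  proof (intro exI conjI)
    show "f ` (A \<union> B) \<noteq> {}" using Vne by simp
    show "\<forall>t\<in>f ` (A \<union> B). 0 < t"
    proof
      fix t assume "t \<in> f ` (A \<union> B)"
      then obtain x where "x \<in> A \<union> B" "t = f x" by blast
      thus "0 < t" using fA fB Lpos by (metis Un_iff add_gr_0 less_one mult_pos_pos not_less zero_less_one le_trans linorder_not_le)
    qed
    show "bij_betw f (A \<union> B) (f ` (A \<union> B))" using inj by (simp add: bij_betw_def)
    show "\<forall>a\<in>A \<union> B. \<forall>b\<in>A \<union> B. a \<noteq> b \<longrightarrow> zdg_adj a b = (f a dvd f b \<or> f b dvd f a)"
    proof (intro ballI impI)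
      fix a b assume a: "a \<in> A \<union> B" and b: "b \<in> A \<union> B" and ne: "a \<noteq> b"
      show "zdg_adj a b = (f a dvd f b \<or> f b dvd f a)"
      proof (cases "a \<in> A")
        case True
        show ?thesis
        proof (cases "b \<in> A")
          case True
          thus ?thesis using \<open>a \<in> A\<close> ne inA nodvdA by (auto simp: zdg_adj_def)
        next
          case False
          hence "b \<in> B" using b by blast
          thus ?thesis using \<open>a \<in> A\<close> ne cross Adv by (auto simp: zdg_adj_def)
        qed
      next
        case False
        hence aB: "a \<in> B" using a by blast
        show ?thesis
        proof (cases "b \<in> A")
          case True
          hence "a * b = 0" using aB cross[of b a] by (simp add: mult.commute)
          thus ?thesis using True aB ne Adv by (auto simp: zdg_adj_def)
        next
          case False
          hence "b \<in> B" using b by blast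
          thus ?thesis using aB ne inB nodvdB by (auto simp: zdg_adj_def)
        qed
      qed
    qed
  qed
qed

end
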